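(* Consider the two-party spatial voting game with abstention described in the context. Suppose (1) both parties' preferences are single-peaked, and (2) the parties agree on cross-side comparisons: for all positive integers $a,b$ such that the relevant policies belong to $X$, \[ R_A(a)\succeq_A L_A(b)\iff R_B(a)\succeq_B L_B(b) \quad\text{and}\quad L_A(b)\succeq_A R_A(a)\iff L_B(b)\succeq_B R_B(a). \] Then no pure-strategy Nash equilibrium exhibits mutual leapfrogging, i.e. there is no pure-strategy Nash equilibrium $(s,t)$ with $t<\tau_A<\tau_B<s$.
   Context: Policy space: $X=\{x_j : j\in I\}$ where $I\subseteq\mathbb Z$ is an interval of integers and $x_j<x_{j+1}$; $X$ is linearly ordered by $<$. Parties: two parties $A$ and $B$ with ideal points $\tau_A=x_p$ and $\tau_B=x_q$, where $p<q$. Each party $i\in\{A,B\}$ has a weak preference order $\succeq_i$ on $X$ with unique ideal point $\tau_i$; $x\succ_i y$ means $x\succeq_i y$ and not $y\succeq_i x$. Single-peakedness of $\succeq_i$: if $x_a<x_b\le\tau_i$ then $x_b\succ_i x_a$, and if $\tau_i\le x_b<x_a$ then $x_b\succ_i x_a$. Ordinal displacements: if $\tau_i=x_c$ and $k$ is a positive integer, $R_i(k)=x_{c+k}$ and $L_i(k)=x_{c-k}$ whenever these belong to $X$. Voters: a finite electorate $V$. Each voter $v\in V$ has an ideal point $\theta_v\in X$, strict single-peaked preferences over $X$ with peak $\theta_v$, and an attraction interval $A_v\subseteq X$, an interval of the order on $X$ containing $\theta_v$. Election: party $A$ chooses $s\in X$, party $B$ chooses $t\in X$. Voter $v$ is active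 at $(s,t)$ if $s\in A_v$ or $t\in A_v$. An active voter votes for the platform she strictly prefers and abstains if indifferent (in particular if $s=t$); inactive voters abstain. $N_A(s,t)$ (resp. $N_B(s,t)$) is the number of active voters strictly preferring $s$ to $t$ (resp. $t$ to $s$). The outcome $g(s,t)$ is $A$ if $N_A>N_B$, $B$ if $N_B>N_A$, and $T$ (tie) if equal. Party objectives (lexicographic): Win $\succ$ Tie $\succ$ Lose for each party (outcome $A$ is a win for $A$ and a loss for $B$, and vice versa); between profiles with the same electoral outcome, $A$ weakly prefers $(s,t)$ to $(s',t')$ iff $s\succeq_A s'$, and $B$ iff $t\succeq_B t'$. A pure-strategy Nash equilibrium is a profile at which neither party has a strictly preferred unilateral deviation. *)

theory Defs
  imports Main
begin

text \<open>Policy x_j is identified with its index j; the policy space is an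
  interval I of integers, ordered by the integer order.\<close>

definition int_interval :: "int set \<Rightarrow> bool" where
  "int_interval I \<longleftrightarrow> (\<forall>a\<in>I. \<forall>c\<in>I. \<forall>b. a \<le> b \<and> b \<le> c \<longrightarrow> b \<in> I)"

definition spref :: "(int \<Rightarrow> int \<Rightarrow> bool) \<Rightarrow> int \<Rightarrow> int \<Rightarrow> bool" where
  "spref R x y \<longleftrightarrow> R x y \<and> \<not> R y x"

definition weak_order_on :: "int set \<Rightarrow> (int \<Rightarrow> int \<Rightarrow> bool) \<Rightarrow> bool" where
  "weak_order_on I R \<longleftrightarrow>
     (\<forall>x\<in>I. \<forall>y\<in>I. R x y \<or> R y x) \<and>
     (\<forall>x\<in>I. \<forall>y\<in>I. \<forall>z\<in>I. R x y \<and> R y z \<longrightarrow> R x z)"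

definition unique_ideal :: "int set \<Rightarrow> (int \<Rightarrow> int \<Rightarrow> bool) \<Rightarrow> int \<Rightarrow> bool" where
  "unique_ideal I R c \<longleftrightarrow> c \<in> I \<and> (\<forall>x\<in>I. x \<noteq> c \<longrightarrow> spref R c x)"

definition single_peaked :: "int set \<Rightarrow> (int \<Rightarrow> int \<Rightarrow> bool) \<Rightarrow> int \<Rightarrow> bool" where
  "single_peaked I R c \<longleftrightarrow>
     (\<forall>a\<in>I. \<forall>b\<in>I. a < b \<and> b \<le> c \<longrightarrow> spref R b a) \<and>
     (\<forall>a\<in>I. \<forall>b\<in>I. c \<le> b \<and> b < a \<longrightarrow> spref R b a)"

definition strict_linear_on :: "int set \<Rightarrow> (int \<Rightarrow> int \<Rightarrow> bool) \<Rightarrow> bool" where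
  "strict_linear_on I P \<longleftrightarrow>
     (\<forall>x\<in>I. \<not> P x x) \<and>
     (\<forall>x\<in>I. \<forall>y\<in>I. \<forall>z\<in>I. P x y \<and> P y z \<longrightarrow> P x z) \<and>
     (\<forall>x\<in>I. \<forall>y\<in>I. x \<noteq> y \<longrightarrow> P x y \<or> P y x)"

definition strict_single_peaked :: "int set \<Rightarrow> (int \<Rightarrow> int \<Rightarrow> bool) \<Rightarrow> int \<Rightarrow> bool" where
  "strict_single_peaked I P c \<longleftrightarrow>
     (\<forall>a\<in>I. \<forall>b\<in>I. a < b \<and> b \<le> c \<longrightarrow> P b a) \<and>
     (\<forall>a\<in>I. \<forall>b\<in>I. c \<le> b \<and> b < a \<longrightarrow> P b a)"

text \<open>Cross-side agreement: for positive integers a b with p+a, p-b, q+a, q-b in I,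
  R_A(a) >=_A L_A(b) iff R_B(a) >=_B L_B(b), and L_A(b) >=_A R_A(a) iff L_B(b) >=_B R_B(a).\<close>
definition cross_agree :: "int set \<Rightarrow> (int \<Rightarrow> int \<Rightarrow> bool) \<Rightarrow> (int \<Rightarrow> int \<Rightarrow> bool) \<Rightarrow> int \<Rightarrow> int \<Rightarrow> bool" where
  "cross_agree I RA RB p q \<longleftrightarrow>
     (\<forall>a b::int. 0 < a \<and> 0 < b \<and> p + a \<in> I \<and> p - b \<in> I \<and> q + a \<in> I \<and> q - b \<in> I \<longrightarrow>
        (RA (p + a) (p - b) \<longleftrightarrow> RB (q + a) (q - b)) \<and>
        (RA (p - b) (p + a) \<longleftrightarrow> RB (q - b) (q + a)))"

datatype outcome = WinA | WinB | Tie

definition active :: "('v \<Rightarrow> int set) \<Rightarrow> 'v \<Rightarrow> int \<Rightarrow> int \<Rightarrow> bool" where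
  "active Att v s t \<longleftrightarrow> s \<in> Att v \<or> t \<in> Att v"

definition votes :: "'v set \<Rightarrow> ('v \<Rightarrow> int set) \<Rightarrow> ('v \<Rightarrow> int \<Rightarrow> int \<Rightarrow> bool) \<Rightarrow> int \<Rightarrow> int \<Rightarrow> int \<Rightarrow> int \<Rightarrow> nat" where
  "votes V Att P s t x y = card {v \<in> V. active Att v s t \<and> P v x y}"

definition NA :: "'v set \<Rightarrow> ('v \<Rightarrow> int set) \<Rightarrow> ('v \<Rightarrow> int \<Rightarrow> int \<Rightarrow> bool) \<Rightarrow> int \<Rightarrow> int \<Rightarrow> nat" where
  "NA V Att P s t = votes V Att P s t s t"

definition NB :: "'v set \<Rightarrow> ('v \<Rightarrow> int set) \<Rightarrow> ('v \<Rightarrow> int \<Rightarrow> int \<Rightarrow> bool) \<Rightarrow> int \<Rightarrow> int \<Rightarrow> nat" where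
  "NB V Att P s t = votes V Att P s t t s"

definition outcome :: "'v set \<Rightarrow> ('v \<Rightarrow> int set) \<Rightarrow> ('v \<Rightarrow> int \<Rightarrow> int \<Rightarrow> bool) \<Rightarrow> int \<Rightarrow> int \<Rightarrow> outcome" where
  "outcome V Att P s t =
     (if NA V Att P s t > NB V Att P s t then WinA
      else if NB V Att P s t > NA V Att P s t then WinB else Tie)"

fun rankA :: "outcome \<Rightarrow> nat" where
  "rankA WinA = 2" | "rankA Tie = 1" | "rankA WinB = 0"

fun rankB :: "outcome \<Rightarrow> nat" where
  "rankB WinB = 2" | "rankB Tie = 1" | "rankB WinA = 0"

definition is_NE :: "int set \<Rightarrow> (int \<Rightarrow> int \<Rightarrow> bool) \<Rightarrow> (int \<Rightarrow> int \<Rightarrow> bool) \<Rightarrow>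
    'v set \<Rightarrow> ('v \<Rightarrow> int set) \<Rightarrow> ('v \<Rightarrow> int \<Rightarrow> int \<Rightarrow> bool) \<Rightarrow> int \<Rightarrow> int \<Rightarrow> bool" where
  "is_NE I RA RB V Att P s t \<longleftrightarrow> s \<in> I \<and> t \<in> I \<and>
     (\<forall>s'\<in>I. \<not> (rankA (outcome V Att P s' t) > rankA (outcome V Att P s t) \<or>
                 (outcome V Att P s' t = outcome V Att P s t \<and> spref RA s' s))) \<and>
     (\<forall>t'\<in>I. \<not> (rankB (outcome V Att P s t') > rankB (outcome V Att P s t) \<or>
                 (outcome V Att P s t' = outcome V Att P s t \<and> spref RB t' t)))"

end

theory Submission
  imports Defs
begin

lemma outcome_same: "outcome V Att P x x = Tie"
  by (simp add: outcome_def NA_def NB_def)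

theorem theorem1:
  fixes I :: "int set" and p q :: int
    and RA RB :: "int \<Rightarrow> int \<Rightarrow> bool"
    and V :: "'v set" and \<theta> :: "'v \<Rightarrow> int"
    and P :: "'v \<Rightarrow> int \<Rightarrow> int \<Rightarrow> bool" and Att :: "'v \<Rightarrow> int set"
  assumes I: "int_interval I"
    and pq: "p \<in> I" "q \<in> I" "p < q"
    and A_pref: "weak_order_on I RA" "unique_ideal I RA p"
    and B_pref: "weak_order_on I RB" "unique_ideal I RB q"
    and sp: "single_peaked I RA p" "single_peaked I RB q"
    and cross: "cross_agree I RA RB p q"
    and V: "finite V"
    and voters: "\<And>v. v \<in> V \<Longrightarrow> \<theta> v \<in> I \<and> strict_linear_on I (P v) \<and>
                   strict_single_peaked I (P v) (\<theta> v) \<and>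
                   int_interval (Att v) \<and> Att v \<subseteq> I \<and> \<theta> v \<in> Att v"
  shows "\<not> (\<exists>s t. is_NE I RA RB V Att P s t \<and> t < p \<and> p < q \<and> q < s)"
proof
  assume "\<exists>s t. is_NE I RA RB V Att P s t \<and> t < p \<and> p < q \<and> q < s"
  then obtain s t where ne: "is_NE I RA RB V Att P s t" and o: "t < p" "q < s" by blast
  have sI: "s \<in> I" and tI: "t \<in> I" using ne by (auto simp: is_NE_def)
  have devA: "\<And>s'. s' \<in> I \<Longrightarrow> \<not> (rankA (outcome V Att P s' t) > rankA (outcome V Att P s t) \<or>
                 (outcome V Att P s' t = outcome V Att P s t \<and> spref RA s' s))"
    using ne by (auto simp: is_NE_def)
  have devB: "\<And>t'. t' \<in> I \<Longrightarrow> \<not> (rankB (outcome V Att P s t') > rankB (outcome V Att P s t) \<or>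
                 (outcome V Att P s t' = outcome V Att P s t \<and> spref RB t' t))"
    using ne by (auto simp: is_NE_def)
  have tie: "outcome V Att P s t = Tie"
  proof (cases "outcome V Att P s t")
    case WinA then show ?thesis using devB[OF sI] by (simp add: outcome_same)
  next
    case WinB then show ?thesis using devA[OF tI] by (simp add: outcome_same)
  qed simp
  have nA: "\<not> spref RA t s" using devA[OF tI] tie by (simp add: outcome_same)
  have nB: "\<not> spref RB s t" using devB[OF sI] tie by (simp add: outcome_same)
  have totA: "\<And>x y. x\<in>I \<Longrightarrow> y\<in>I \<Longrightarrow> RA x y \<or> RA y x"
    using A_pref(1) unfolding weak_order_on_def by blast
  have totB: "\<And>x y. x\<in>I \<Longrightarrow> y\<in>I \<Longrightarrow> RB x y \<or> RB y x"
    using B_pref(1) unfolding weak_order_on_def by blast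
  have RAst: "RA s t" using nA totA[OF sI tI] unfolding spref_def by blast
  have RBts: "RB t s" using nB totB[OF sI tI] unfolding spref_def by blast
  define m where "m = p + (s - q)"
  define n where "n = q - (p - t)"
  have mI: "m \<in> I" using I pq(1) sI unfolding int_interval_def
  proof -
    have "p \<le> m \<and> m \<le> s" using o pq unfolding m_def by simp
    then show ?thesis using I pq(1) sI unfolding int_interval_def by blast
  qed
  have nI: "n \<in> I"
  proof -
    have "t \<le> n \<and> n \<le> q" using o pq unfolding n_def by simp
    then show ?thesis using I pq(2) tI unfolding int_interval_def by blast
  qed
  have ms: "spref RA m s" using sp(1) mI sI pq o unfolding single_peaked_def m_def by auto
  have nt: "spref RB n t" using sp(2) nI tI pq o unfolding single_peaked_def n_def by auto
  have transA: "\<And>x y z. x\<in>I \<Longrightarrow> y\<in>I \<Longrightarrow> z\<in>I \<Longrightarrow> RA x y \<Longrightarrow> RA y z \<Longrightarrow> RA x z"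
    using A_pref(1) unfolding weak_order_on_def by blast
  have transB: "\<And>x y z. x\<in>I \<Longrightarrow> y\<in>I \<Longrightarrow> z\<in>I \<Longrightarrow> RB x y \<Longrightarrow> RB y z \<Longrightarrow> RB x z"
    using B_pref(1) unfolding weak_order_on_def by blast
  have ntm: "\<not> RA t m"
  proof
    assume "RA t m"
    then have "RA s m" using transA[OF sI tI mI] RAst by simp
    then show False using ms unfolding spref_def by simp
  qed
  have c: "(RA m t \<longleftrightarrow> RB s n) \<and> (RA t m \<longleftrightarrow> RB n s)"
  proof -
    have "0 < s - q" "0 < p - t" using o by simp_all
    moreover have "p + (s - q) \<in> I" "p - (p - t) \<in> I" "q + (s - q) \<in> I" "q - (p - t) \<in> I"
      using mI tI sI nI unfolding m_def n_def by simp_all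
    ultimately have "(RA (p + (s - q)) (p - (p - t)) \<longleftrightarrow> RB (q + (s - q)) (q - (p - t))) \<and>
        (RA (p - (p - t)) (p + (s - q)) \<longleftrightarrow> RB (q - (p - t)) (q + (s - q)))"
      using cross[unfolded cross_agree_def, rule_format, of "s - q" "p - t"] by simp
    then show ?thesis unfolding m_def n_def by simp
  qed
  have "RB n s" using transB[OF nI tI sI] nt RBts unfolding spref_def by simp
  then show False using c ntm by blast
qed

end
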